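(* Let $G$ be a connected simple graph with maximum degree at most $3$ and minimum degree at least $2$, in which no two adjacent vertices both have degree $3$. Let $M_1,M_2$ be disjoint matchings of $G$ such that $|M_1\cup M_2|$ is maximum over all pairs of disjoint matchings, and, subject to this, such that $G_{M_1,M_2}$ has the minimum number of connected components. Let $H$ be the graph with vertex set $E(G)\setminus(M_1\cup M_2)$ in which two distinct edges are adjacent if and only if their distance in $G$ is at most $2$. Then $H$ has no odd cycle.
   Context: $G_{M_1,M_2}$ denotes the subgraph of $G$ induced by the edge set $E(G)\setminus(M_1\cup M_2)$. The distance between two edges of $G$ is the distance between the corresponding vertices in the line graph of $G$. *)

theory Defs
  imports Main
begin

definition simple_graph :: "'a set \<Rightarrow> 'a set set \<Rightarrow> bool" where
  "simple_graph V E \<longleftrightarrow> finite V \<and> (\<forall>e\<in>E. e \<subseteq> V \<and> card e = 2)"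

definition degree :: "'a set set \<Rightarrow> 'a \<Rightarrow> nat" where
  "degree E v = card {e \<in> E. v \<in> e}"

definition adj_rel :: "'a set set \<Rightarrow> ('a \<times> 'a) set" where
  "adj_rel E = {(u, v). {u, v} \<in> E}"

definition connected_graph :: "'a set \<Rightarrow> 'a set set \<Rightarrow> bool" where
  "connected_graph V E \<longleftrightarrow> V \<noteq> {} \<and> (\<forall>u\<in>V. \<forall>v\<in>V. (u, v) \<in> (adj_rel E)\<^sup>*)"

definition matching :: "'a set set \<Rightarrow> 'a set set \<Rightarrow> bool" where
  "matching E M \<longleftrightarrow> M \<subseteq> E \<and> (\<forall>e\<in>M. \<forall>f\<in>M. e \<noteq> f \<longrightarrow> e \<inter> f = {})"

(* connected components of the subgraph induced by the edge set F
   (vertex set = all endpoints of edges of F) *)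
definition components :: "'a set set \<Rightarrow> 'a set set" where
  "components F = (\<Union>F) // ((adj_rel F)\<^sup>*)"

definition num_components :: "'a set set \<Rightarrow> nat" where
  "num_components F = card (components F)"

definition line_adj :: "'a set set \<Rightarrow> 'a set \<Rightarrow> 'a set \<Rightarrow> bool" where
  "line_adj E e f \<longleftrightarrow> e \<in> E \<and> f \<in> E \<and> e \<noteq> f \<and> e \<inter> f \<noteq> {}"

(* distance between edges e and f of G (distance in the line graph) is at most k *)
definition edge_dist_le :: "'a set set \<Rightarrow> 'a set \<Rightarrow> 'a set \<Rightarrow> nat \<Rightarrow> bool" where
  "edge_dist_le E e f k \<longleftrightarrow>
     (\<exists>xs. xs \<noteq> [] \<and> length xs \<le> k + 1 \<and> hd xs = e \<and> last xs = f \<and> e \<in> E \<and>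
           (\<forall>i. Suc i < length xs \<longrightarrow> line_adj E (xs ! i) (xs ! Suc i)))"

definition is_cycle :: "'b set \<Rightarrow> ('b \<Rightarrow> 'b \<Rightarrow> bool) \<Rightarrow> 'b list \<Rightarrow> bool" where
  "is_cycle W A cs \<longleftrightarrow> length cs \<ge> 3 \<and> distinct cs \<and> set cs \<subseteq> W \<and>
     (\<forall>i < length cs. A (cs ! i) (cs ! ((i + 1) mod length cs)))"

definition has_odd_cycle :: "'b set \<Rightarrow> ('b \<Rightarrow> 'b \<Rightarrow> bool) \<Rightarrow> bool" where
  "has_odd_cycle W A \<longleftrightarrow> (\<exists>cs. is_cycle W A cs \<and> odd (length cs))"

end

theory Submission
  imports Defs
begin
lemma adj_rel_iff[simp]: "(u, v) \<in> adj_rel F \<longleftrightarrow> {u, v} \<in> F"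
  by (simp add: adj_rel_def)

lemma adj_rel_sym: "(u, v) \<in> adj_rel F \<Longrightarrow> (v, u) \<in> adj_rel F"
  by (simp add: insert_commute)

lemma conn_sym: "(x, y) \<in> (adj_rel F)\<^sup>* \<Longrightarrow> (y, x) \<in> (adj_rel F)\<^sup>*"
proof (induction rule: rtrancl_induct)
  case base then show ?case by simp
next
  case (step y z)
  then show ?case using adj_rel_sym[OF step(2)]
    by (meson converse_rtrancl_into_rtrancl)
qed

lemma adj_rel_mono: "F \<subseteq> G \<Longrightarrow> adj_rel F \<subseteq> adj_rel G"
  by (auto simp: adj_rel_def)

lemma conn_mono: "F \<subseteq> G \<Longrightarrow> (x, y) \<in> (adj_rel F)\<^sup>* \<Longrightarrow> (x, y) \<in> (adj_rel G)\<^sup>*"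
proof -
  assume "F \<subseteq> G" "(x, y) \<in> (adj_rel F)\<^sup>*"
  moreover have "(adj_rel F)\<^sup>* \<subseteq> (adj_rel G)\<^sup>*"
    by (rule rtrancl_mono, rule adj_rel_mono, fact)
  ultimately show ?thesis by blast
qed

lemma conn_last: "(x, y) \<in> (adj_rel F)\<^sup>* \<Longrightarrow> x \<noteq> y \<Longrightarrow> \<exists>h\<in>F. y \<in> h"
proof (induction rule: rtrancl_induct)
  case base then show ?case by simp
next
  case (step y z)
  then have "{y, z} \<in> F" by simp
  then show ?case by blast
qed

lemma conn_first: "(x, y) \<in> (adj_rel F)\<^sup>* \<Longrightarrow> x \<noteq> y \<Longrightarrow> \<exists>h\<in>F. x \<in> h"
proof -
  assume a: "(x, y) \<in> (adj_rel F)\<^sup>*" and b: "x \<noteq> y"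
  have "(y, x) \<in> (adj_rel F)\<^sup>*" by (rule conn_sym[OF a])
  moreover have "y \<noteq> x" using b by simp
  ultimately show ?thesis by (rule conn_last)
qed

lemma conn_in_union: "(x, y) \<in> (adj_rel F)\<^sup>* \<Longrightarrow> y = x \<or> y \<in> \<Union>F"
  using conn_last[of x y F] by auto

lemma finite_components: "finite (\<Union>F) \<Longrightarrow> finite (components F)"
proof -
  assume "finite (\<Union>F)"
  moreover have "components F = (\<lambda>x. (adj_rel F)\<^sup>* `` {x}) ` (\<Union>F)"
    unfolding components_def quotient_def by auto
  ultimately show ?thesis by simp
qed

lemma comp_remove:
  assumes fin: "finite (\<Union>F)" and eF: "e \<in> F" and e: "e = {a, b}" and ab: "a \<noteq> b"
    and iso: "\<forall>f\<in>F. f \<noteq> e \<longrightarrow> f \<inter> e = {}"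
  shows "card (components (F - {e})) < card (components F)"
proof -
  let ?r = "adj_rel F"
  let ?q = "adj_rel (F - {e})"
  have U0: "\<Union>(F - {e}) = \<Union>F - e" using iso eF by blast
  have cl: "(x, y) \<in> ?q\<^sup>* \<and> y \<notin> e" if "(x, y) \<in> ?r\<^sup>*" "x \<notin> e" for x y
    using that
  proof (induction rule: rtrancl_induct)
    case base then show ?case by simp
  next
    case (step y z)
    then have yz: "{y, z} \<in> F" "y \<notin> e" "(x, y) \<in> ?q\<^sup>*" by auto
    then have ne: "{y, z} \<noteq> e" by auto
    then have "(y, z) \<in> ?q" using yz by auto
    moreover have "z \<notin> e" using iso yz ne by blast
    ultimately show ?case using yz by (meson rtrancl.rtrancl_into_rtrancl)
  qed
  have eq: "?r\<^sup>* `` {x} = ?q\<^sup>* `` {x}" if "x \<notin> e" for x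
  proof (intro set_eqI iffI)
    fix y assume "y \<in> ?r\<^sup>* `` {x}"
    then show "y \<in> ?q\<^sup>* `` {x}" using cl[OF _ that] by simp
  next
    fix y assume "y \<in> ?q\<^sup>* `` {x}"
    then have "(x, y) \<in> ?q\<^sup>*" by simp
    then have "(x, y) \<in> ?r\<^sup>*" by (rule conn_mono[rotated]) auto
    then show "y \<in> ?r\<^sup>* `` {x}" by simp
  qed
  have ca: "?r\<^sup>* `` {a} = e"
  proof
    show "?r\<^sup>* `` {a} \<subseteq> e"
    proof
      fix y assume "y \<in> ?r\<^sup>* `` {a}"
      then have "(a, y) \<in> ?r\<^sup>*" by simp
      then show "y \<in> e"
      proof (induction rule: rtrancl_induct)
        case base then show ?case using e by simp
      next
        case (step y z)
        then have yzF: "{y, z} \<in> F" by simp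
        have yze: "{y, z} \<inter> e \<noteq> {}" using step by auto
        have "{y, z} = e"
        proof (rule ccontr)
          assume "{y, z} \<noteq> e"
          then have "{y, z} \<inter> e = {}" using iso yzF by simp
          then show False using yze by simp
        qed
        then show ?case by blast
      qed
    qed
  next
    have "(a, b) \<in> ?r" using eF e by simp
    then have "(a, b) \<in> ?r\<^sup>*" by (rule r_into_rtrancl)
    then have "b \<in> ?r\<^sup>* `` {a}" by (rule ImageI) simp
    moreover have "a \<in> ?r\<^sup>* `` {a}" by simp
    ultimately have "{a, b} \<subseteq> ?r\<^sup>* `` {a}" by simp
    then show "e \<subseteq> ?r\<^sup>* `` {a}" unfolding e .
  qed
  have sub: "components (F - {e}) \<subseteq> components F - {e}"
  proof
    fix C assume "C \<in> components (F - {e})"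
    then obtain x where x: "x \<in> \<Union>(F - {e})" "C = ?q\<^sup>* `` {x}"
      unfolding components_def quotient_def by blast
    then have xe: "x \<notin> e" "x \<in> \<Union>F" using U0 by auto
    then have C: "C = ?r\<^sup>* `` {x}" using eq x by simp
    have "x \<in> C" using x by blast
    then have "C \<noteq> e" using xe by blast
    moreover have "C \<in> components F"
      unfolding components_def quotient_def using xe(2) C by blast
    ultimately show "C \<in> components F - {e}" by blast
  qed
  have "a \<in> \<Union>F" using eF e by blast
  then have "e \<in> components F"
    using ca unfolding components_def quotient_def by (auto intro!: UN_I[of a])
  then have "components F - {e} \<subset> components F" by blast
  then have "components (F - {e}) \<subset> components F" using sub by blast
  then show ?thesis using finite_components[OF fin] psubset_card_mono by blast
qed

lemma comp_add:
  assumes fin: "finite (\<Union>F)" and p: "p \<in> \<Union>F"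
  shows "card (components (insert {p, v} F)) \<le> card (components F)"
proof -
  let ?r = "adj_rel F"
  let ?r' = "adj_rel (insert {p, v} F)"
  have sub: "components (insert {p, v} F) \<subseteq> (\<lambda>C. ?r'\<^sup>* `` C) ` components F"
  proof
    fix C assume "C \<in> components (insert {p, v} F)"
    then obtain y where y: "y \<in> \<Union>(insert {p, v} F)" "C = ?r'\<^sup>* `` {y}"
      unfolding components_def quotient_def by auto
    have main: "?r'\<^sup>* `` {x} \<in> (\<lambda>C. ?r'\<^sup>* `` C) ` components F" if "x \<in> \<Union>F" for x
    proof -
      have "?r'\<^sup>* `` {x} = ?r'\<^sup>* `` (?r\<^sup>* `` {x})"
      proof
        show "?r'\<^sup>* `` {x} \<subseteq> ?r'\<^sup>* `` (?r\<^sup>* `` {x})" by auto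
        show "?r'\<^sup>* `` (?r\<^sup>* `` {x}) \<subseteq> ?r'\<^sup>* `` {x}"
          using conn_mono[of F "insert {p, v} F"]
          by (auto intro: rtrancl_trans)
      qed
      moreover have "?r\<^sup>* `` {x} \<in> components F"
        using that unfolding components_def quotient_def by auto
      ultimately show ?thesis by blast
    qed
    show "C \<in> (\<lambda>C. ?r'\<^sup>* `` C) ` components F"
    proof (cases "y \<in> \<Union>F")
      case True then show ?thesis using main y by simp
    next
      case False
      then have "y = v \<or> y = p" using y by auto
      then have yv: "y = v" using p False by auto
      have "(v, p) \<in> ?r'" "(p, v) \<in> ?r'" by (auto simp: insert_commute)
      then have "?r'\<^sup>* `` {v} = ?r'\<^sup>* `` {p}"
        by (auto intro: converse_rtrancl_into_rtrancl)
      then show ?thesis using main[OF p] y yv by simp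
    qed
  qed
  have "card (components (insert {p, v} F)) \<le> card ((\<lambda>C. ?r'\<^sup>* `` C) ` components F)"
    using sub finite_components[OF fin] by (simp add: card_mono)
  also have "\<dots> \<le> card (components F)" using card_image_le finite_components[OF fin] by blast
  finally show ?thesis .
qed

lemma degree_mono: "finite G \<Longrightarrow> F \<subseteq> G \<Longrightarrow> degree F x \<le> degree G x"
  unfolding degree_def by (rule card_mono) auto

lemma three_ends:
  assumes "finite F" "\<forall>g\<in>F. card g = 2" "\<forall>x. degree F x \<le> 2"
    "p \<noteq> q" "q \<noteq> r" "p \<noteq> r" "degree F p = 1" "degree F q = 1" "degree F r = 1"
    "(q, p) \<in> (adj_rel F)\<^sup>*" "(q, r) \<in> (adj_rel F)\<^sup>*"
  shows False
  using assms
proof (induction "card F" arbitrary: F p q r rule: less_induct)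
  case less
  note fin = less.prems(1) and c2 = less.prems(2) and d2 = less.prems(3)
  obtain g where g: "{h \<in> F. p \<in> h} = {g}"
    using less.prems(7) unfolding degree_def by (rule card_1_singletonE)
  have gF: "g \<in> F" and pg: "p \<in> g" using g by auto
  have onlyg: "h = g" if "h \<in> F" "p \<in> h" for h using g that by auto
  obtain x y where xy: "g = {x, y}" "x \<noteq> y" using c2 gF card_2_iff by metis
  obtain p' where gp: "g = {p, p'}" and pp': "p \<noteq> p'"
    using xy pg by (metis insert_commute insertE singletonD)
  define F' where "F' = F - {g}"
  have F'F: "F' \<subseteq> F" unfolding F'_def by auto
  have finF': "finite F'" using fin F'F finite_subset by blast
  have cardF': "card F' < card F" unfolding F'_def by (rule card_Diff1_less[OF fin gF])
  have noP: "\<not> (\<exists>h\<in>F'. p \<in> h)" unfolding F'_def using onlyg by blast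
  have avoid: "(q, z) \<in> (adj_rel F')\<^sup>* \<or> (z = p \<and> (q, p') \<in> (adj_rel F')\<^sup>*)"
    if "(q, z) \<in> (adj_rel F)\<^sup>*" for z
    using that
  proof (induction rule: rtrancl_induct)
    case base then show ?case by simp
  next
    case (step y z)
    have yzF: "{y, z} \<in> F" using step(2) by simp
    show ?case
    proof (cases "{y, z} = g")
      case True
      then have c: "(y = p \<and> z = p') \<or> (y = p' \<and> z = p)" using gp pp'
        by (metis doubleton_eq_iff)
      show ?thesis
      proof (cases "y = p")
        case True
        then have zp: "z = p'" using c pp' by auto
        from step(3) show ?thesis
        proof
          assume "(q, y) \<in> (adj_rel F')\<^sup>*"
          then have "(q, p) \<in> (adj_rel F')\<^sup>*" using True by simp
          then have "\<exists>h\<in>F'. p \<in> h" using conn_last less.prems(4) by metis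
          then show ?thesis using noP by blast
        next
          assume "y = p \<and> (q, p') \<in> (adj_rel F')\<^sup>*"
          then show ?thesis using zp by simp
        qed
      next
        case False
        then have "y = p'" "z = p" using c by auto
        from step(3) show ?thesis
        proof
          assume "(q, y) \<in> (adj_rel F')\<^sup>*"
          then show ?thesis using \<open>y = p'\<close> \<open>z = p\<close> by simp
        next
          assume "y = p \<and> (q, p') \<in> (adj_rel F')\<^sup>*"
          then show ?thesis using False by simp
        qed
      qed
    next
      case False
      then have yzF': "(y, z) \<in> adj_rel F'" using yzF unfolding F'_def by simp
      from step(3) show ?thesis
      proof
        assume "(q, y) \<in> (adj_rel F')\<^sup>*"
        then show ?thesis using yzF' by (meson rtrancl.rtrancl_into_rtrancl)
      next
        assume a: "y = p \<and> (q, p') \<in> (adj_rel F')\<^sup>*"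
        then have "{y, z} = g" using onlyg yzF by simp
        then show ?thesis using False by simp
      qed
    qed
  qed
  have qp': "(q, p') \<in> (adj_rel F')\<^sup>*"
    using avoid[OF less.prems(10)] conn_last less.prems(4) noP by metis
  have qr: "(q, r) \<in> (adj_rel F')\<^sup>*"
    using avoid[OF less.prems(11)] less.prems(6) by auto
  have degsame: "degree F' x = degree F x" if "x \<notin> g" for x
  proof -
    have "{h \<in> F'. x \<in> h} = {h \<in> F. x \<in> h}" unfolding F'_def using that by auto
    then show ?thesis unfolding degree_def by simp
  qed
  have degp': "degree F' p' = degree F p' - 1"
  proof -
    have "{h \<in> F'. p' \<in> h} = {h \<in> F. p' \<in> h} - {g}" unfolding F'_def by auto
    moreover have "g \<in> {h \<in> F. p' \<in> h}" using gF gp by auto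
    moreover have "finite {h \<in> F. p' \<in> h}" using fin by simp
    ultimately show ?thesis unfolding degree_def by simp
  qed
  have qdeg: "degree F' q = 1" if "q \<noteq> p'"
    using degsame[of q] that gp less.prems(4,8) by auto
  have rdeg: "degree F' r = 1" if "r \<noteq> p'"
    using degsame[of r] that gp less.prems(6,9) by auto
  have pos: "degree F' x \<ge> 1" if "\<exists>h\<in>F'. x \<in> h" for x
  proof -
    have "{h \<in> F'. x \<in> h} \<noteq> {}" using that by auto
    moreover have "finite {h \<in> F'. x \<in> h}" using finF' by simp
    ultimately show ?thesis unfolding degree_def by (simp add: Suc_le_eq card_gt_0_iff)
  qed
  show False
  proof (cases "p' = q")
    case True
    then have "degree F' q = 0" using degp' less.prems(8) by simp
    moreover have "\<exists>h\<in>F'. q \<in> h" using conn_first[OF qr less.prems(5)] .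
    ultimately show False using pos by fastforce
  next
    case nq: False
    show False
    proof (cases "p' = r")
      case True
      then have "degree F' r = 0" using degp' less.prems(9) by simp
      moreover have "\<exists>h\<in>F'. r \<in> h" using conn_last[OF qr less.prems(5)] .
      ultimately show False using pos by fastforce
    next
      case nr: False
      have "degree F' p' \<le> 1" using degp' d2[rule_format, of p'] by linarith
      moreover have "degree F' p' \<ge> 1" using pos conn_last[OF qp'] nq by metis
      ultimately have dp': "degree F' p' = 1" by simp
      have "\<forall>g\<in>F'. card g = 2" using c2 F'F by blast
      moreover have "\<forall>x. degree F' x \<le> 2" using d2 degree_mono[OF fin F'F] le_trans by blast
      ultimately show False
        using less.hyps[OF cardF' finF' _ _ _ _ _ dp' qdeg rdeg qp' qr] nq nr less.prems(5)
        by metis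
    qed
  qed
qed

definition good :: "'a set set \<Rightarrow> 'a set set \<Rightarrow> 'a set set \<Rightarrow> 'a set set \<Rightarrow> bool" where
  "good E MM N1 N2 \<longleftrightarrow> matching E N1 \<and> matching E N2 \<and> N1 \<inter> N2 = {} \<and> N1 \<union> N2 = MM"

definition KE :: "'a set set \<Rightarrow> 'a \<Rightarrow> 'a set set" where
  "KE F w = {g \<in> F. \<exists>x\<in>g. (w, x) \<in> (adj_rel F)\<^sup>*}"

definition swp :: "'a set set \<Rightarrow> 'a set set \<Rightarrow> 'a set set \<Rightarrow> 'a set set" where
  "swp K N1 N2 = (N1 - K) \<union> (N2 \<inter> K)"

locale L =
  fixes V :: "'a set" and E M1 M2 :: "'a set set"
  assumes sg: "simple_graph V E"
    and dmax: "\<forall>v\<in>V. degree E v \<le> 3"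
    and dmin: "\<forall>v\<in>V. degree E v \<ge> 2"
    and no33: "\<forall>u v. {u, v} \<in> E \<longrightarrow> \<not> (degree E u = 3 \<and> degree E v = 3)"
    and m1: "matching E M1" and m2: "matching E M2" and disj: "M1 \<inter> M2 = {}"
    and maxc: "\<forall>N1 N2. matching E N1 \<and> matching E N2 \<and> N1 \<inter> N2 = {}
           \<longrightarrow> card (N1 \<union> N2) \<le> card (M1 \<union> M2)"
    and minc: "\<forall>N1 N2. matching E N1 \<and> matching E N2 \<and> N1 \<inter> N2 = {}
           \<and> card (N1 \<union> N2) = card (M1 \<union> M2)
           \<longrightarrow> num_components (E - (M1 \<union> M2)) \<le> num_components (E - (N1 \<union> N2))"
begin

abbreviation "MM \<equiv> M1 \<union> M2"
abbreviation "RR \<equiv> E - MM"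

lemma finV: "finite V" using sg unfolding simple_graph_def by simp

lemma edge_props: "e \<in> E \<Longrightarrow> e \<subseteq> V \<and> card e = 2"
  using sg unfolding simple_graph_def by blast

lemma finE: "finite E"
proof -
  have "E \<subseteq> Pow V" using edge_props by blast
  then show ?thesis using finV finite_subset by blast
qed

lemma edge2: "e \<in> E \<Longrightarrow> \<exists>a b. e = {a, b} \<and> a \<noteq> b"
  using edge_props card_2_iff by metis

lemma inV: "e \<in> E \<Longrightarrow> x \<in> e \<Longrightarrow> x \<in> V"
  using edge_props by blast

lemma degE: "x \<in> V \<Longrightarrow> degree E x = 2 \<or> degree E x = 3"
  using dmax dmin by fastforce

lemma MsubE: "MM \<subseteq> E" using m1 m2 unfolding matching_def by blast

lemma finM: "finite MM" using MsubE finE finite_subset by blast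

lemma finUR: "finite (\<Union>RR)"
proof -
  have "\<Union>RR \<subseteq> V" using edge_props by blast
  then show ?thesis using finV finite_subset by blast
qed

lemma match_le1:
  assumes "matching E N" shows "card {g \<in> N. x \<in> g} \<le> 1"
proof -
  have fin: "finite {g \<in> N. x \<in> g}"
    using assms finE unfolding matching_def by (metis (no_types, lifting) finite_subset mem_Collect_eq subsetI subset_iff)
  have "\<forall>a1\<in>{g \<in> N. x \<in> g}. \<forall>a2\<in>{g \<in> N. x \<in> g}. a1 = a2"
    using assms unfolding matching_def by blast
  then show ?thesis using card_le_Suc0_iff_eq[OF fin] by simp
qed

lemma degM: "degree MM x \<le> 2"
proof -
  have "{g \<in> MM. x \<in> g} = {g \<in> M1. x \<in> g} \<union> {g \<in> M2. x \<in> g}" by auto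
  then have "degree MM x \<le> card {g \<in> M1. x \<in> g} + card {g \<in> M2. x \<in> g}"
    unfolding degree_def by (metis card_Un_le)
  then show ?thesis using match_le1[OF m1, of x] match_le1[OF m2, of x] by linarith
qed

lemma degsplit: "degree E x = degree MM x + degree RR x"
proof -
  have "{g \<in> E. x \<in> g} = {g \<in> MM. x \<in> g} \<union> {g \<in> RR. x \<in> g}" using MsubE by auto
  moreover have "finite {g \<in> MM. x \<in> g}" "finite {g \<in> RR. x \<in> g}" using finE finM by auto
  ultimately show ?thesis unfolding degree_def by (simp add: card_Un_disjoint disjoint_iff)
qed

lemma deg_pos: "finite F \<Longrightarrow> g \<in> F \<Longrightarrow> x \<in> g \<Longrightarrow> degree F x \<ge> 1"
proof -
  assume a: "finite F" "g \<in> F" "x \<in> g"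
  have "{e \<in> F. x \<in> e} \<noteq> {}" using a by blast
  moreover have "finite {e \<in> F. x \<in> e}" using a by simp
  ultimately show ?thesis unfolding degree_def by (simp add: Suc_le_eq card_gt_0_iff)
qed

lemma deg_two: "finite F \<Longrightarrow> g \<in> F \<Longrightarrow> h \<in> F \<Longrightarrow> g \<noteq> h \<Longrightarrow> x \<in> g \<Longrightarrow> x \<in> h \<Longrightarrow> degree F x \<ge> 2"
proof -
  assume a: "finite F" "g \<in> F" "h \<in> F" "g \<noteq> h" "x \<in> g" "x \<in> h"
  have "{g, h} \<subseteq> {f \<in> F. x \<in> f}" using a by auto
  moreover have "finite {f \<in> F. x \<in> f}" using a by simp
  ultimately have "card {g, h} \<le> degree F x" unfolding degree_def by (rule card_mono[rotated])
  then show ?thesis using a(4) by simp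
qed

lemma deg_three: "finite F \<Longrightarrow> g \<in> F \<Longrightarrow> h \<in> F \<Longrightarrow> k \<in> F \<Longrightarrow> g \<noteq> h \<Longrightarrow> g \<noteq> k \<Longrightarrow> h \<noteq> k
   \<Longrightarrow> x \<in> g \<Longrightarrow> x \<in> h \<Longrightarrow> x \<in> k \<Longrightarrow> degree F x \<ge> 3"
proof -
  assume a: "finite F" "g \<in> F" "h \<in> F" "k \<in> F" "g \<noteq> h" "g \<noteq> k" "h \<noteq> k" "x \<in> g" "x \<in> h" "x \<in> k"
  have "{g, h, k} \<subseteq> {f \<in> F. x \<in> f}" using a by auto
  moreover have "finite {f \<in> F. x \<in> f}" using a by simp
  ultimately have "card {g, h, k} \<le> degree F x" unfolding degree_def by (rule card_mono[rotated])
  then show ?thesis using a(5-7) by simp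
qed

lemma goodM: "good E MM M1 M2" "good E MM M2 M1"
  unfolding good_def using m1 m2 disj by auto

lemma good_sym: "good E MM N1 N2 \<Longrightarrow> good E MM N2 N1"
  unfolding good_def by auto

lemma good_sub: "good E MM N1 N2 \<Longrightarrow> N1 \<subseteq> MM \<and> N2 \<subseteq> MM"
  unfolding good_def by auto

lemma addE:
  assumes g: "good E MM N1 N2" and uw: "{u, w} \<in> RR"
    and u: "\<forall>h\<in>N1. u \<notin> h" and w: "\<forall>h\<in>N1. w \<notin> h"
  shows False
proof -
  have mN1: "matching E N1" and mN2: "matching E N2" and d: "N1 \<inter> N2 = {}" and U: "N1 \<union> N2 = MM"
    using g unfolding good_def by auto
  have "matching E (insert {u, w} N1)"
    using mN1 uw u w unfolding matching_def by auto
  moreover have "insert {u, w} N1 \<inter> N2 = {}" using d uw U by auto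
  ultimately have "card (insert {u, w} N1 \<union> N2) \<le> card MM" using maxc mN2 by blast
  moreover have "insert {u, w} N1 \<union> N2 = insert {u, w} MM" using U by auto
  moreover have "card (insert {u, w} MM) = Suc (card MM)" using finM uw by simp
  ultimately show False by simp
qed

lemma KE_reach: "g \<in> KE MM w \<Longrightarrow> u \<in> g \<Longrightarrow> (w, u) \<in> (adj_rel MM)\<^sup>*"
proof -
  assume a: "g \<in> KE MM w" "u \<in> g"
  then obtain x where x: "x \<in> g" "(w, x) \<in> (adj_rel MM)\<^sup>*" "g \<in> MM" unfolding KE_def by blast
  show ?thesis
  proof (cases "x = u")
    case True then show ?thesis using x by simp
  next
    case False
    have "card g = 2" using x(3) MsubE edge_props by blast
    then obtain c d where cd: "g = {c, d}" "c \<noteq> d" by (meson card_2_iff)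
    then have "g = {x, u}" using x(1) a(2) False by auto
    then have "(x, u) \<in> adj_rel MM" using x(3) by simp
    then show ?thesis using x(2) by (meson rtrancl.rtrancl_into_rtrancl)
  qed
qed

lemma KE_in: "g \<in> MM \<Longrightarrow> u \<in> g \<Longrightarrow> (w, u) \<in> (adj_rel MM)\<^sup>* \<Longrightarrow> g \<in> KE MM w"
  unfolding KE_def by blast

lemma kempe_good:
  assumes g: "good E MM N1 N2"
  shows "good E MM (swp (KE MM w) N1 N2) (swp (KE MM w) N2 N1)"
proof -
  let ?K = "KE MM w"
  have mN1: "matching E N1" and mN2: "matching E N2" and d: "N1 \<inter> N2 = {}" and U: "N1 \<union> N2 = MM"
    using g unfolding good_def by auto
  have cl: "h \<in> ?K" if a: "g \<in> ?K" "h \<in> MM" "g \<inter> h \<noteq> {}" for g h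
  proof -
    obtain u where u: "u \<in> g" "u \<in> h" using a by blast
    then have "(w, u) \<in> (adj_rel MM)\<^sup>*" using KE_reach a(1) by blast
    then show ?thesis using KE_in a(2) u(2) by blast
  qed
  have match: "matching E (swp ?K A B)" if "matching E A" "matching E B" "A \<union> B = MM" for A B
    unfolding matching_def
  proof (intro conjI ballI impI)
    show "swp ?K A B \<subseteq> E" using that unfolding swp_def matching_def by blast
  next
    fix e f assume ef: "e \<in> swp ?K A B" "f \<in> swp ?K A B" "e \<noteq> f"
    show "e \<inter> f = {}"
    proof (rule ccontr)
      assume ne: "e \<inter> f \<noteq> {}"
      then have ne': "f \<inter> e \<noteq> {}" by blast
      have eM: "e \<in> MM" "f \<in> MM" using ef that unfolding swp_def by auto
      consider "e \<in> A - ?K" "f \<in> A - ?K" | "e \<in> B \<inter> ?K" "f \<in> B \<inter> ?K"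
        | "e \<in> A - ?K" "f \<in> B \<inter> ?K" | "e \<in> B \<inter> ?K" "f \<in> A - ?K"
        using ef unfolding swp_def by blast
      then show False
      proof cases
        case 1 then show ?thesis using that(1) ef(3) ne unfolding matching_def by blast
      next
        case 2 then show ?thesis using that(2) ef(3) ne unfolding matching_def by blast
      next
        case 3 then show ?thesis using cl[of f e] eM ne' by blast
      next
        case 4 then show ?thesis using cl[of e f] eM ne by blast
      qed
    qed
  qed
  show ?thesis unfolding good_def
  proof (intro conjI)
    show "matching E (swp ?K N1 N2)" using match mN1 mN2 U by blast
    show "matching E (swp ?K N2 N1)" using match mN1 mN2 U by blast
    show "swp ?K N1 N2 \<inter> swp ?K N2 N1 = {}" using d unfolding swp_def by blast
    show "swp ?K N1 N2 \<union> swp ?K N2 N1 = MM" using U unfolding swp_def by blast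
  qed
qed

lemma kempe_far:
  assumes "good E MM N1 N2" "(w, u) \<notin> (adj_rel MM)\<^sup>*"
  shows "\<forall>h \<in> swp (KE MM w) N1 N2. u \<in> h \<longrightarrow> h \<in> N1"
  using assms KE_reach unfolding swp_def by blast

lemma kempe_keep: "g \<in> N1 \<Longrightarrow> g \<notin> KE MM w \<Longrightarrow> g \<in> swp (KE MM w) N1 N2"
  unfolding swp_def by blast

lemma kempe_at:
  assumes g: "good E MM N1 N2" and d1: "degree MM w \<le> 1" and h1: "h1 \<in> N1" "w \<in> h1"
  shows "\<forall>h \<in> swp (KE MM w) N1 N2. w \<notin> h"
proof (intro ballI notI)
  fix h assume h: "h \<in> swp (KE MM w) N1 N2" "w \<in> h"
  have d: "N1 \<inter> N2 = {}" and U: "N1 \<union> N2 = MM" using g unfolding good_def by auto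
  have hM: "h \<in> MM" using h U unfolding swp_def by blast
  then have "h \<in> KE MM w" using h(2) KE_in by blast
  then have "h \<in> N2" using h unfolding swp_def by blast
  then have "h \<noteq> h1" using d h1 by blast
  moreover have "h1 \<in> MM" using h1 U by blast
  ultimately have "degree MM w \<ge> 2" using deg_two[OF finM hM] h h1 by blast
  then show False using d1 by simp
qed

lemma addK:
  assumes g: "good E MM N1 N2" and uw: "{u, w} \<in> RR" and u: "\<forall>h\<in>N1. u \<notin> h"
    and dw: "degree MM w \<le> 1" and nc: "(w, u) \<notin> (adj_rel MM)\<^sup>*"
  shows False
proof (cases "\<exists>h\<in>N1. w \<in> h")
  case False
  then show ?thesis using addE[OF g uw u] by blast
next
  case True
  then obtain h1 where h1: "h1 \<in> N1" "w \<in> h1" by blast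
  let ?N1 = "swp (KE MM w) N1 N2" and ?N2 = "swp (KE MM w) N2 N1"
  have g': "good E MM ?N1 ?N2" by (rule kempe_good[OF g])
  have "\<forall>h\<in>?N1. w \<notin> h" by (rule kempe_at[OF g dw h1])
  moreover have "\<forall>h\<in>?N1. u \<notin> h" using kempe_far[OF g nc] u by blast
  ultimately show ?thesis using addE[OF g' uw] by blast
qed

lemma exch:
  assumes g: "good E MM N1 N2" and pv: "{p, v} \<in> N1" and va: "{v, a} \<in> RR"
    and iso: "\<forall>f\<in>RR. f \<noteq> {v, a} \<longrightarrow> f \<inter> {v, a} = {}"
    and f0: "f0 \<in> RR" "f0 \<noteq> {v, a}" "p \<in> f0"
    and da: "degree MM a \<le> 1"
    and alt: "(\<forall>h\<in>N1. a \<notin> h) \<or> (a, v) \<notin> (adj_rel MM)\<^sup>*"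
  shows False
proof -
  obtain P1 P2 where gP: "good E MM P1 P2" and pvP: "{p, v} \<in> P1" and aP: "\<forall>h\<in>P1. a \<notin> h"
  proof (cases "\<forall>h\<in>N1. a \<notin> h")
    case True then show ?thesis by (rule that[OF g pv])
  next
    case False
    then have nc: "(a, v) \<notin> (adj_rel MM)\<^sup>*" using alt by blast
    obtain h1 where h1: "h1 \<in> N1" "a \<in> h1" using False by blast
    have "{p, v} \<notin> KE MM a"
    proof
      assume "{p, v} \<in> KE MM a"
      then have "(a, v) \<in> (adj_rel MM)\<^sup>*" using KE_reach by blast
      then show False using nc by blast
    qed
    then have "{p, v} \<in> swp (KE MM a) N1 N2" using kempe_keep pv by blast
    then show ?thesis by (rule that[OF kempe_good[OF g] _ kempe_at[OF g da h1]])
  qed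
  have mP1: "matching E P1" and mP2: "matching E P2" and d: "P1 \<inter> P2 = {}" and U: "P1 \<union> P2 = MM"
    using gP unfolding good_def by auto
  let ?Q = "insert {v, a} (P1 - {{p, v}})"
  have mP1': "\<forall>e\<in>P1. \<forall>f\<in>P1. e \<noteq> f \<longrightarrow> e \<inter> f = {}"
    using mP1 unfolding matching_def by blast
  have vnot: "v \<notin> h" if hh: "h \<in> P1" "h \<noteq> {p, v}" for h
  proof -
    have "h \<inter> {p, v} = {}" using mP1'[rule_format, OF hh(1) pvP hh(2)] .
    then show ?thesis by blast
  qed
  have mQ: "matching E ?Q"
    unfolding matching_def
  proof (intro conjI ballI impI)
    have "P1 \<subseteq> E" using mP1 unfolding matching_def by simp
    moreover have "{v, a} \<in> E" using va by simp
    ultimately show "?Q \<subseteq> E" by auto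
  next
    fix e f assume ef: "e \<in> ?Q" "f \<in> ?Q" "e \<noteq> f"
    have dis: "{v, a} \<inter> h = {}" if "h \<in> P1" "h \<noteq> {p, v}" for h
    proof -
      have "v \<notin> h" using vnot that by simp
      moreover have "a \<notin> h" using aP that by simp
      ultimately show ?thesis by simp
    qed
    show "e \<inter> f = {}"
    proof (cases "e = {v, a}")
      case True
      then have "f \<in> P1" "f \<noteq> {p, v}" using ef by auto
      then show ?thesis using True dis by simp
    next
      case False
      note eF = False
      show ?thesis
      proof (cases "f = {v, a}")
        case True
        then have "e \<in> P1" "e \<noteq> {p, v}" using ef eF by auto
        then have "{v, a} \<inter> e = {}" using dis by simp
        then show ?thesis using True by (simp add: Int_commute)
      next
        case False
        then have "e \<in> P1" "f \<in> P1" using ef eF by auto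
        then show ?thesis using mP1' ef(3) by simp
      qed
    qed
  qed
  have "{v, a} \<notin> P2" using va U by auto
  then have dQ: "?Q \<inter> P2 = {}" using d by auto
  have pvM: "{p, v} \<in> MM" using pvP U by blast
  have UQ: "?Q \<union> P2 = insert {v, a} (MM - {{p, v}})" using U d pvP by auto
  have "card (insert {v, a} (MM - {{p, v}})) = Suc (card (MM - {{p, v}}))"
    using finM va by simp
  also have "\<dots> = card MM" by (rule card_Suc_Diff1[OF finM pvM])
  finally have cQ: "card (?Q \<union> P2) = card MM" using UQ by simp
  have "num_components RR \<le> num_components (E - (?Q \<union> P2))"
    using minc[rule_format, of ?Q P2] mQ mP2 dQ cQ by simp
  moreover have "E - (?Q \<union> P2) = insert {p, v} (RR - {{v, a}})"
    using UQ va pvM MsubE by auto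
  ultimately have le: "num_components RR \<le> num_components (insert {p, v} (RR - {{v, a}}))"
    by simp
  have fin2: "finite (\<Union>(RR - {{v, a}}))" by (rule finite_subset[OF _ finUR]) blast
  have pU: "p \<in> \<Union>(RR - {{v, a}})" using f0 by blast
  have c1: "num_components (insert {p, v} (RR - {{v, a}})) \<le> num_components (RR - {{v, a}})"
    unfolding num_components_def by (rule comp_add[OF fin2 pU])
  have "card {v, a} = 2" using va edge_props by blast
  then have vna: "v \<noteq> a" by (cases "v = a") auto
  have c2: "num_components (RR - {{v, a}}) < num_components RR"
    unfolding num_components_def by (rule comp_remove[OF finUR va refl vna iso])
  show False using le c1 c2 by simp
qed

end

lemma card_ge2_obtain:
  assumes "card S \<ge> 2" obtains a b where "a \<in> S" "b \<in> S" "a \<noteq> b"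
proof -
  have fin: "finite S" using assms by (metis card.infinite not_numeral_le_zero)
  have "\<not> (\<forall>a\<in>S. \<forall>b\<in>S. a = b)" using card_le_Suc0_iff_eq[OF fin] assms by simp
  then show ?thesis using that by blast
qed

context L begin

lemma finR: "finite RR" using finE by simp

lemma MR_ne: "g \<in> MM \<Longrightarrow> f \<in> RR \<Longrightarrow> g \<noteq> f"
  by auto

lemma other_end: "e \<in> E \<Longrightarrow> x \<in> e \<Longrightarrow> \<exists>y. e = {x, y} \<and> x \<noteq> y"
proof -
  assume a: "e \<in> E" "x \<in> e"
  obtain c d where cd: "e = {c, d}" "c \<noteq> d" using edge2[OF a(1)] by blast
  show ?thesis
  proof (cases "x = c")
    case True then show ?thesis using cd by blast
  next
    case False then have "x = d" using a(2) cd by blast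
    then show ?thesis using cd by (metis insert_commute)
  qed
qed

lemma edge_eq: "e \<in> E \<Longrightarrow> a \<in> e \<Longrightarrow> b \<in> e \<Longrightarrow> a \<noteq> b \<Longrightarrow> e = {a, b}"
proof -
  assume h: "e \<in> E" "a \<in> e" "b \<in> e" "a \<noteq> b"
  obtain y where y: "e = {a, y}" "a \<noteq> y" using other_end[OF h(1,2)] by blast
  then have "b = y" using h(3,4) by blast
  then show ?thesis using y by simp
qed

lemma dM_le1: "degree E x = 2 \<Longrightarrow> f \<in> RR \<Longrightarrow> x \<in> f \<Longrightarrow> degree MM x \<le> 1"
  using degsplit[of x] deg_pos[OF finR, of f x] by linarith

lemma pick_color:
  assumes "degree MM x \<le> 1" shows "\<exists>N1 N2. good E MM N1 N2 \<and> (\<forall>h\<in>N1. x \<notin> h)"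
proof (cases "\<forall>h\<in>M1. x \<notin> h")
  case True then show ?thesis using goodM by blast
next
  case False
  then obtain h1 where h1: "h1 \<in> M1" "x \<in> h1" by blast
  have "\<forall>h\<in>M2. x \<notin> h"
  proof (intro ballI notI)
    fix h assume h: "h \<in> M2" "x \<in> h"
    have "h \<noteq> h1" using h h1 disj by blast
    then have "degree MM x \<ge> 2" using deg_two[OF finM, of h h1 x] h h1 by blast
    then show False using assms by simp
  qed
  then show ?thesis using goodM by blast
qed

lemma pick_edge:
  assumes "g \<in> MM" shows "\<exists>N1 N2. good E MM N1 N2 \<and> g \<in> N1"
  using assms goodM by blast

lemma deg3_M2:
  assumes xV: "x \<in> V" and d3: "degree E x = 3"
  shows "degree MM x = 2"
proof (rule ccontr)
  assume "degree MM x \<noteq> 2"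
  then have dm: "degree MM x \<le> 1" using degM[of x] by simp
  then have "degree RR x \<ge> 2" using degsplit[of x] d3 by simp
  then obtain e1 e2 where e: "e1 \<in> {g \<in> RR. x \<in> g}" "e2 \<in> {g \<in> RR. x \<in> g}" "e1 \<noteq> e2"
    unfolding degree_def by (rule card_ge2_obtain)
  obtain a where a: "e1 = {x, a}" "x \<noteq> a" using other_end e(1) by blast
  obtain y where y: "e2 = {x, y}" "x \<noteq> y" using other_end e(2) by blast
  have ay: "a \<noteq> y" using a y e(3) by blast
  have conn: "(w, x) \<in> (adj_rel MM)\<^sup>* \<and> degree MM w \<le> 1"
    if w: "{x, w} \<in> RR" "x \<noteq> w" for w
  proof -
    have wV: "w \<in> V" using inV w by blast
    have "degree E w \<noteq> 3" using no33 w d3 by blast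
    then have dw2: "degree E w = 2" using degE[OF wV] by blast
    have dw: "degree MM w \<le> 1" using dM_le1[OF dw2 w(1)] by simp
    obtain N1 N2 where N: "good E MM N1 N2" "\<forall>h\<in>N1. x \<notin> h" using pick_color[OF dm] by blast
    have "(w, x) \<in> (adj_rel MM)\<^sup>*"
    proof (rule ccontr)
      assume "(w, x) \<notin> (adj_rel MM)\<^sup>*"
      then show False using addK[OF N(1) w(1) N(2) dw] by blast
    qed
    then show ?thesis using dw by simp
  qed
  have ca: "(a, x) \<in> (adj_rel MM)\<^sup>*" "degree MM a \<le> 1" using conn[of a] a e(1) by auto
  have cy: "(y, x) \<in> (adj_rel MM)\<^sup>*" "degree MM y \<le> 1" using conn[of y] y e(2) by auto
  have "\<exists>h\<in>MM. x \<in> h" using conn_last[OF ca(1)] a(2) by blast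
  then have "degree MM x \<ge> 1" using deg_pos[OF finM] by blast
  then have dx: "degree MM x = 1" using dm by simp
  have "\<exists>h\<in>MM. a \<in> h" using conn_first[OF ca(1)] a(2) by metis
  then have da: "degree MM a = 1" using deg_pos[OF finM] ca(2) by (metis le_antisym)
  have "\<exists>h\<in>MM. y \<in> h" using conn_first[OF cy(1)] y(2) by metis
  then have dy: "degree MM y = 1" using deg_pos[OF finM] cy(2) by (metis le_antisym)
  have c2: "\<forall>g\<in>MM. card g = 2" using MsubE edge_props by blast
  have dg: "\<forall>z. degree MM z \<le> 2" using degM by blast
  have ax: "a \<noteq> x" using a(2) by simp
  show False
    by (rule three_ends[OF finM c2 dg ax y(2) ay da dx dy conn_sym[OF ca(1)] conn_sym[OF cy(1)]])
qed

lemma oneR: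
  assumes xV: "x \<in> V" and h: "degree E x = 3 \<or> (\<exists>g\<in>MM. x \<in> g)"
    and f: "f \<in> RR" "f' \<in> RR" "x \<in> f" "x \<in> f'"
  shows "f = f'"
proof (rule ccontr)
  assume ne: "f \<noteq> f'"
  have r2: "degree RR x \<ge> 2" using deg_two[OF finR f(1,2) ne f(3,4)] .
  have s: "degree E x = degree MM x + degree RR x" by (rule degsplit)
  have le3: "degree E x \<le> 3" using dmax xV by blast
  show False
  proof (cases "degree E x = 3")
    case True
    then show False using deg3_M2[OF xV True] s r2 by simp
  next
    case False
    then obtain g where "g \<in> MM" "x \<in> g" using h by blast
    then have "degree MM x \<ge> 1" using deg_pos[OF finM] by blast
    then show False using s r2 le3 False by simp
  qed
qed

lemma deg2_three:
  assumes "degree E x = 2" "g \<in> E" "h \<in> E" "k \<in> E" "g \<noteq> h" "g \<noteq> k" "h \<noteq> k"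
    "x \<in> g" "x \<in> h" "x \<in> k"
  shows False
  using deg_three[OF finE assms(2-10)] assms(1) by simp

lemma T22:
  assumes xy: "{x, y} \<in> RR" and dx: "degree E x = 2" and dy: "degree E y = 2"
  shows "\<exists>h\<in>MM. x \<in> h"
proof (rule ccontr)
  assume nx: "\<not> (\<exists>h\<in>MM. x \<in> h)"
  have "degree MM y \<le> 1" using dM_le1[OF dy xy] by simp
  then obtain N1 N2 where N: "good E MM N1 N2" "\<forall>h\<in>N1. y \<notin> h" using pick_color by blast
  have "\<forall>h\<in>N1. x \<notin> h" using nx good_sub[OF N(1)] by blast
  then show False using addE[OF N(1) xy] N(2) by blast
qed

lemma T3iso:
  assumes xy: "{x, y} \<in> RR" and dx: "degree E x = 2" and dy: "degree E y = 2"
    and xq: "{x, q} \<in> MM" and f: "f \<in> RR" "f \<noteq> {x, y}" "q \<in> f"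
  shows False
proof -
  obtain N1 N2 where N: "good E MM N1 N2" "{x, q} \<in> N1" using pick_edge[OF xq] by blast
  have d: "N1 \<inter> N2 = {}" and U: "N1 \<union> N2 = MM" using N(1) unfolding good_def by auto
  have xyE: "{x, y} \<in> E" using xy by simp
  have xqE: "{x, q} \<in> E" using xq MsubE by blast
  have xqne: "{x, q} \<noteq> {x, y}" using MR_ne[OF xq xy] .
  have onlyx: "h = {x, q}" if "h \<in> MM" "x \<in> h" for h
  proof (rule ccontr)
    assume "h \<noteq> {x, q}"
    moreover have "h \<noteq> {x, y}" using MR_ne[OF that(1) xy] .
    moreover have "h \<in> E" using that MsubE by blast
    ultimately show False using deg2_three[OF dx xyE xqE _ not_sym[OF xqne]] that by (metis insertI1)
  qed
  have x2: "\<forall>h\<in>N2. x \<notin> h"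
  proof (intro ballI notI)
    fix h assume "h \<in> N2" "x \<in> h"
    then have "h = {x, q}" using onlyx U by blast
    then show False using \<open>h \<in> N2\<close> N(2) d by blast
  qed
  obtain h2 where h2: "h2 \<in> N2" "y \<in> h2"
  proof (cases "\<exists>h\<in>N2. y \<in> h")
    case True then show ?thesis using that by blast
  next
    case False
    then show ?thesis using addE[OF good_sym[OF N(1)] xy x2] by blast
  qed
  have dmy: "degree MM y \<le> 1" using dM_le1[OF dy, of "{x, y}"] xy by simp
  have y1: "\<forall>h\<in>N1. y \<notin> h"
  proof (intro ballI notI)
    fix h assume h: "h \<in> N1" "y \<in> h"
    have "h \<noteq> h2" using h h2 d by blast
    moreover have "h \<in> MM" "h2 \<in> MM" using h h2 U by auto
    ultimately have "degree MM y \<ge> 2" using deg_two[OF finM] h h2 by blast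
    then show False using dmy by simp
  qed
  have h2E: "h2 \<in> E" "h2 \<in> MM" using h2 U MsubE by auto
  have iso: "\<forall>f'\<in>RR. f' \<noteq> {x, y} \<longrightarrow> f' \<inter> {x, y} = {}"
  proof (intro ballI impI)
    fix f' assume f': "f' \<in> RR" "f' \<noteq> {x, y}"
    show "f' \<inter> {x, y} = {}"
    proof (rule ccontr)
      assume "f' \<inter> {x, y} \<noteq> {}"
      then have "x \<in> f' \<or> y \<in> f'" by blast
      then show False
      proof
        assume "x \<in> f'"
        moreover have "f' \<noteq> {x, q}" using MR_ne[OF xq f'(1)] by simp
        moreover have "f' \<in> E" using f' by simp
        ultimately show False using deg2_three[OF dx xyE xqE _ not_sym[OF xqne]] f' by (metis insertI1)
      next
        assume yf: "y \<in> f'"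
        have fh: "f' \<noteq> h2" using MR_ne[OF h2E(2) f'(1)] by simp
        have fE: "f' \<in> E" using f' by simp
        have xh: "{x, y} \<noteq> h2" using MR_ne[OF h2E(2) xy] by simp
        have yy: "y \<in> {x, y}" by simp
        show False using deg2_three[OF dy xyE h2E(1) fE xh not_sym[OF f'(2)] not_sym[OF fh] yy h2(2) yf] .
      qed
    qed
  qed
  have qx: "{q, x} \<in> N1" using N(2) by (simp add: insert_commute)
  show False using exch[OF N(1) qx xy iso f dmy] y1 by blast
qed

definition Out :: "'a set \<Rightarrow> 'a set \<Rightarrow> bool" where
  "Out e f \<longleftrightarrow> e \<in> RR \<and> f \<in> RR \<and> e \<noteq> f \<and>
     (\<exists>x\<in>e. degree E x = 2 \<and> (x \<in> f \<or> (\<exists>q\<in>f. {x, q} \<in> MM)))"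

lemma T3_noout_aux:
  assumes zw: "{z, w} \<in> RR" and dz: "degree E z = 2" and dw: "degree E w = 2"
    and f: "f \<in> RR" "f \<noteq> {z, w}" and c: "z \<in> f \<or> (\<exists>q\<in>f. {z, q} \<in> MM)"
  shows False
  using c
proof
  assume zf: "z \<in> f"
  obtain h where h: "h \<in> MM" "z \<in> h" using T22[OF zw dz dw] by blast
  have "h \<noteq> f" "h \<noteq> {z, w}" using MR_ne[OF h(1) f(1)] MR_ne[OF h(1) zw] by auto
  moreover have "h \<in> E" using h MsubE by blast
  moreover have "{z, w} \<in> E" "f \<in> E" using zw f by auto
  ultimately show False using deg2_three[OF dz, of "{z, w}" f h] f(2) zf h(2) by auto
next
  assume "\<exists>q\<in>f. {z, q} \<in> MM"
  then obtain q where "q \<in> f" "{z, q} \<in> MM" by blast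
  then show False using T3iso[OF zw dz dw _ f] by blast
qed

lemma noOutT3:
  assumes e: "e = {x, y}" "e \<in> RR" and dx: "degree E x = 2" and dy: "degree E y = 2"
  shows "\<not> Out e f"
proof
  assume "Out e f"
  then obtain z where z: "z \<in> e" "degree E z = 2" "z \<in> f \<or> (\<exists>q\<in>f. {z, q} \<in> MM)"
    and f: "f \<in> RR" "f \<noteq> e" unfolding Out_def by blast
  show False
  proof (cases "z = x")
    case True
    then show False using T3_noout_aux[of x y f] e dx dy z f by blast
  next
    case False
    then have zy: "z = y" using z e by blast
    have "e = {y, x}" using e by (simp add: insert_commute)
    then show False using T3_noout_aux[of y x f] e dx dy z f zy by simp
  qed
qed

end

lemma mod_plus2_ne:
  fixes k n :: nat assumes "k \<ge> 3" shows "(n + 2) mod k \<noteq> n mod k"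
proof
  assume "(n + 2) mod k = n mod k"
  then have "k dvd (n + 2) - n" using mod_eq_dvd_iff_nat[of n "n + 2" k] by simp
  then have "k dvd 2" by simp
  then have "k \<le> 2" by (rule dvd_imp_le) simp
  then show False using assms by simp
qed

context L begin

lemma adj_out:
  assumes e: "e \<in> RR" and f: "f \<in> RR" and ef: "e \<noteq> f" and h: "h \<in> E"
    and eh: "e \<inter> h \<noteq> {}" and hf: "h \<inter> f \<noteq> {}"
  shows "Out e f \<or> Out f e"
proof (cases "e \<inter> f = {}")
  case False
  then obtain z where z: "z \<in> e" "z \<in> f" by blast
  have zV: "z \<in> V" using inV e z by blast
  have "degree E z \<noteq> 3"
  proof
    assume "degree E z = 3"
    then have "e = f" using oneR[OF zV _ e f z] by blast
    then show False using ef by simp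
  qed
  then have "degree E z = 2" using degE[OF zV] by blast
  then have "Out e f" unfolding Out_def using e f ef z by blast
  then show ?thesis by simp
next
  case True
  obtain s where s: "s \<in> e" "s \<in> h" using eh by blast
  obtain t where t: "t \<in> h" "t \<in> f" using hf by blast
  have st: "s \<noteq> t" using s t True by blast
  have hst: "h = {s, t}" using edge_eq[OF h s(2) t(1) st] .
  have sV: "s \<in> V" and tV: "t \<in> V" using inV h s t by auto
  show ?thesis
  proof (cases "h \<in> MM")
    case True
    have "\<not> (degree E s = 3 \<and> degree E t = 3)" using no33 h hst by blast
    then have "degree E s = 2 \<or> degree E t = 2" using degE[OF sV] degE[OF tV] by blast
    then show ?thesis
    proof
      assume "degree E s = 2"
      then have "Out e f" unfolding Out_def using e f ef s(1) t(2) True hst by blast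
      then show ?thesis by simp
    next
      assume "degree E t = 2"
      moreover have "{t, s} \<in> MM" using True hst by (simp add: insert_commute)
      ultimately have "Out f e" unfolding Out_def using e f ef s(1) t(2) by blast
      then show ?thesis by simp
    qed
  next
    case False
    then have hR: "h \<in> RR" using h by simp
    have he: "h \<noteq> e" using t True by blast
    have hf': "h \<noteq> f" using s True by blast
    have d2: "degree E w = 2" and noM: "\<forall>g\<in>MM. w \<notin> g"
      if w: "w \<in> V" "w \<in> g1" "w \<in> h" "g1 \<in> RR" "g1 \<noteq> h" for w g1
    proof -
      have "degree E w \<noteq> 3"
      proof
        assume "degree E w = 3"
        then have "g1 = h" using oneR[OF w(1) _ w(4) hR w(2,3)] by blast
        then show False using w(5) by simp
      qed
      then show dw: "degree E w = 2" using degE[OF w(1)] by blast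
      show "\<forall>g\<in>MM. w \<notin> g"
      proof (intro ballI notI)
        fix g assume g: "g \<in> MM" "w \<in> g"
        have "g \<noteq> g1" "g \<noteq> h" using MR_ne[OF g(1) w(4)] MR_ne[OF g(1) hR] by auto
        moreover have "g \<in> E" "g1 \<in> E" using g(1) MsubE w(4) by auto
        ultimately show False using deg2_three[OF dw \<open>g1 \<in> E\<close> h \<open>g \<in> E\<close> w(5)] w g by blast
      qed
    qed
    have ds: "degree E s = 2" and ns: "\<forall>g\<in>MM. s \<notin> g"
      using d2[OF sV s(1) s(2) e not_sym[OF he]] noM[OF sV s(1) s(2) e not_sym[OF he]] by auto
    have dt: "degree E t = 2"
      using d2[OF tV t(2) t(1) f not_sym[OF hf']] by auto
    have "{s, t} \<in> RR" using hR hst by simp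
    then have "\<exists>g\<in>MM. s \<in> g" using T22 ds dt by blast
    then show ?thesis using ns by blast
  qed
qed

lemma out_fun:
  assumes o1: "Out e f" and o2: "Out e f'"
  shows "f = f'"
proof -
  obtain x where x: "x \<in> e" "degree E x = 2" "x \<in> f \<or> (\<exists>q\<in>f. {x, q} \<in> MM)"
    and e: "e \<in> RR" and f: "f \<in> RR" "e \<noteq> f" using o1 unfolding Out_def by blast
  obtain x' where x': "x' \<in> e" "degree E x' = 2" "x' \<in> f' \<or> (\<exists>q\<in>f'. {x', q} \<in> MM)"
    and f': "f' \<in> RR" "e \<noteq> f'" using o2 unfolding Out_def by blast
  have "x = x'"
  proof (rule ccontr)
    assume "x \<noteq> x'"
    then have "e = {x, x'}" using edge_eq[of e x x'] e x x' by simp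
    then show False using noOutT3[of e x x' f] e x(2) x'(2) o1 by simp
  qed
  then have x'': "x \<in> f' \<or> (\<exists>q\<in>f'. {x, q} \<in> MM)" using x' by simp
  have eE: "e \<in> E" "f \<in> E" "f' \<in> E" using e f f' by auto
  show ?thesis
  proof (rule ccontr)
    assume nf: "f \<noteq> f'"
    show False
    proof (cases "x \<in> f")
      case xf: True
      show False
      proof (cases "x \<in> f'")
        case True
        show False by (rule deg2_three[OF x(2) eE f(2) f'(2) nf x(1) xf True])
      next
        case False
        then obtain q where q: "q \<in> f'" "{x, q} \<in> MM" using x'' by blast
        have qE: "{x, q} \<in> E" using q MsubE by blast
        have "e \<noteq> {x, q}" "f \<noteq> {x, q}" using MR_ne[OF q(2) e] MR_ne[OF q(2) f(1)] by auto
        then show False using deg2_three[OF x(2) eE(1,2) qE f(2)] x(1) xf by simp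
      qed
    next
      case nxf: False
      then obtain q where q: "q \<in> f" "{x, q} \<in> MM" using x(3) by blast
      have qE: "{x, q} \<in> E" using q MsubE by blast
      show False
      proof (cases "x \<in> f'")
        case True
        have "e \<noteq> {x, q}" "f' \<noteq> {x, q}" using MR_ne[OF q(2) e] MR_ne[OF q(2) f'(1)] by auto
        then show False using deg2_three[OF x(2) eE(1,3) qE f'(2)] x(1) True by simp
      next
        case False
        then obtain q' where q': "q' \<in> f'" "{x, q'} \<in> MM" using x'' by blast
        have q'E: "{x, q'} \<in> E" using q' MsubE by blast
        have "{x, q} = {x, q'}"
        proof (rule ccontr)
          assume ne: "{x, q} \<noteq> {x, q'}"
          have "e \<noteq> {x, q}" "e \<noteq> {x, q'}" using MR_ne[OF q(2) e] MR_ne[OF q'(2) e] by auto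
          then show False using deg2_three[OF x(2) eE(1) qE q'E _ _ ne] x(1) by simp
        qed
        moreover have "x \<noteq> q" using edge_props[OF qE] by (cases "x = q") auto
        ultimately have qq: "q = q'" by (metis doubleton_eq_iff)
        have qV: "q \<in> V" using inV[OF qE] by simp
        have "\<exists>g\<in>MM. q \<in> g" using q by blast
        then have "f = f'" using oneR[OF qV _ f(1) f'(1) q(1)] q'(1) qq by blast
        then show False using nf by simp
      qed
    qed
  qed
qed

lemma stepS:
  assumes ab: "Out a b" and bc: "Out b c" and ca: "c \<noteq> a"
  shows "\<exists>x y. x \<in> a \<and> degree E x = 2 \<and> y \<in> b \<and> degree E y = 3 \<and> {x, y} \<in> MM"
proof -
  obtain x where x: "x \<in> a" "degree E x = 2" "x \<in> b \<or> (\<exists>q\<in>b. {x, q} \<in> MM)"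
    and a: "a \<in> RR" and b: "b \<in> RR" "a \<noteq> b" using ab unfolding Out_def by blast
  show ?thesis
  proof (cases "x \<in> b")
    case True
    then have "Out b a" unfolding Out_def using a b x by blast
    then have "a = c" using out_fun bc by blast
    then show ?thesis using ca by simp
  next
    case False
    then obtain q where q: "q \<in> b" "{x, q} \<in> MM" using x(3) by blast
    have qV: "q \<in> V" using inV b q by blast
    have "degree E q \<noteq> 2"
    proof
      assume "degree E q = 2"
      moreover have "{q, x} \<in> MM" using q by (simp add: insert_commute)
      ultimately have "Out b a" unfolding Out_def using a b q x(1) by blast
      then have "a = c" using out_fun bc by blast
      then show False using ca by simp
    qed
    then have "degree E q = 3" using degE[OF qV] by blast
    then show ?thesis using x q by blast
  qed
qed

lemma Out_R: "Out a b \<Longrightarrow> a \<in> RR \<and> b \<in> RR \<and> a \<noteq> b"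
  unfolding Out_def by blast

lemma conn_step:
  assumes d: "Out d1 d2" and x1: "x1 \<in> d1" "degree E x1 = 2"
    and y2: "y2 \<in> d2" "degree E y2 = 3" and x2: "x2 \<in> d2" "degree E x2 = 2"
    and x1y2: "{x1, y2} \<in> MM" and x2M: "\<exists>g\<in>MM. x2 \<in> g"
  shows "(x2, y2) \<in> (adj_rel MM)\<^sup>*"
proof (rule ccontr)
  assume nc: "(x2, y2) \<notin> (adj_rel MM)\<^sup>*"
  have d1: "d1 \<in> RR" and d2: "d2 \<in> RR" "d1 \<noteq> d2" using Out_R[OF d] by auto
  have yx: "y2 \<noteq> x2" using y2 x2 by auto
  have d2eq: "d2 = {y2, x2}" using edge_eq[of d2 y2 x2] d2 y2 x2 yx by simp
  obtain N1 N2 where N: "good E MM N1 N2" "{x1, y2} \<in> N1" using pick_edge[OF x1y2] by blast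
  have y2V: "y2 \<in> V" and x2V: "x2 \<in> V" using inV d2 y2 x2 by auto
  have iso: "\<forall>f\<in>RR. f \<noteq> {y2, x2} \<longrightarrow> f \<inter> {y2, x2} = {}"
  proof (intro ballI impI)
    fix f assume f: "f \<in> RR" "f \<noteq> {y2, x2}"
    show "f \<inter> {y2, x2} = {}"
    proof (rule ccontr)
      assume "f \<inter> {y2, x2} \<noteq> {}"
      then have "y2 \<in> f \<or> x2 \<in> f" by blast
      then have "f = d2"
      proof
        assume "y2 \<in> f" then show "f = d2" using oneR[OF y2V _ f(1) d2(1)] y2 by blast
      next
        assume "x2 \<in> f" then show "f = d2" using oneR[OF x2V _ f(1) d2(1)] x2 x2M by blast
      qed
      then show False using f d2eq by simp
    qed
  qed
  have dm: "degree MM x2 \<le> 1" using dM_le1[OF x2(2) d2(1) x2(1)] .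
  have va: "{y2, x2} \<in> RR" using d2 d2eq by simp
  have f0: "d1 \<noteq> {y2, x2}" using d2 d2eq by simp
  show False using exch[OF N(1) N(2) va iso d1 f0 x1(1) dm] nc by blast
qed

lemma chain5:
  assumes o0: "Out d0 d1" and o1: "Out d1 d2" and o2: "Out d2 d3" and o3: "Out d3 d4"
    and n02: "d2 \<noteq> d0" and n13: "d3 \<noteq> d1" and n24: "d4 \<noteq> d2"
  shows False
proof -
  obtain x0 y1 where A: "x0 \<in> d0" "degree E x0 = 2" "y1 \<in> d1" "degree E y1 = 3" "{x0, y1} \<in> MM"
    using stepS[OF o0 o1 n02] by blast
  obtain x1 y2 where B: "x1 \<in> d1" "degree E x1 = 2" "y2 \<in> d2" "degree E y2 = 3" "{x1, y2} \<in> MM"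
    using stepS[OF o1 o2 n13] by blast
  obtain x2 y3 where C: "x2 \<in> d2" "degree E x2 = 2" "y3 \<in> d3" "degree E y3 = 3" "{x2, y3} \<in> MM"
    using stepS[OF o2 o3 n24] by blast
  have x1M: "\<exists>g\<in>MM. x1 \<in> g" using B by blast
  have x2M: "\<exists>g\<in>MM. x2 \<in> g" using C by blast
  have x0M: "\<exists>g\<in>MM. x0 \<in> g" using A by blast
  have c1: "(x1, y1) \<in> (adj_rel MM)\<^sup>*" using conn_step[OF o0 A(1,2) A(3,4) B(1,2) A(5) x1M] .
  have c2: "(x2, y2) \<in> (adj_rel MM)\<^sup>*" using conn_step[OF o1 B(1,2) B(3,4) C(1,2) B(5) x2M] .
  have "(y1, x0) \<in> adj_rel MM" using A(5) by (simp add: insert_commute)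
  then have c10: "(x1, x0) \<in> (adj_rel MM)\<^sup>*" using c1 by (meson rtrancl.rtrancl_into_rtrancl)
  have "(x1, y2) \<in> adj_rel MM" using B(5) by simp
  then have c12: "(x1, x2) \<in> (adj_rel MM)\<^sup>*" using conn_sym[OF c2]
    by (meson converse_rtrancl_into_rtrancl)
  have R0: "d0 \<in> RR" "d0 \<noteq> d1" and R1: "d1 \<in> RR" "d1 \<noteq> d2" and R2: "d2 \<in> RR"
    using Out_R[OF o0] Out_R[OF o1] by auto
  have x0V: "x0 \<in> V" and x1V: "x1 \<in> V" using inV R0 R1 A B by auto
  have n01: "x0 \<noteq> x1"
  proof
    assume "x0 = x1"
    then have "d0 = d1" using oneR[OF x0V _ R0(1) R1(1) A(1)] B(1) x0M by blast
    then show False using R0 by simp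
  qed
  have n12: "x1 \<noteq> x2"
  proof
    assume "x1 = x2"
    then have "d1 = d2" using oneR[OF x1V _ R1(1) R2 B(1)] C(1) x1M by blast
    then show False using R1 by simp
  qed
  have n02': "x0 \<noteq> x2"
  proof
    assume "x0 = x2"
    then have "d0 = d2" using oneR[OF x0V _ R0(1) R2 A(1)] C(1) x0M by blast
    then show False using n02 by simp
  qed
  have deg1: "degree MM x = 1" if "degree E x = 2" "x \<in> d" "d \<in> RR" "\<exists>g\<in>MM. x \<in> g" for x d
    using dM_le1[OF that(1) that(3) that(2)] deg_pos[OF finM] that(4) by (metis le_antisym)
  have e0: "degree MM x0 = 1" using deg1 A(2) A(1) R0(1) x0M by blast
  have e1: "degree MM x1 = 1" using deg1 B(2) B(1) R1(1) x1M by blast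
  have e2: "degree MM x2 = 1" using deg1 C(2) C(1) R2 x2M by blast
  have c2': "\<forall>g\<in>MM. card g = 2" using MsubE edge_props by blast
  have dg: "\<forall>z. degree MM z \<le> 2" using degM by blast
  show False by (rule three_ends[OF finM c2' dg n01 n12 n02' e0 e1 e2 c10 c12])
qed

lemma dist_edge:
  assumes "edge_dist_le E e f 2" "e \<noteq> f"
  shows "\<exists>h\<in>E. e \<inter> h \<noteq> {} \<and> h \<inter> f \<noteq> {}"
proof -
  obtain xs where xs: "xs \<noteq> []" "length xs \<le> 3" "hd xs = e" "last xs = f" "e \<in> E"
    "\<forall>i. Suc i < length xs \<longrightarrow> line_adj E (xs ! i) (xs ! Suc i)"
    using assms(1) unfolding edge_dist_le_def by auto
  have h0: "xs ! 0 = e" using xs(1,3) by (simp add: hd_conv_nth)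
  have hl: "xs ! (length xs - 1) = f" using xs(1,4) by (simp add: last_conv_nth)
  have l1: "length xs \<noteq> 1" using h0 hl assms(2) by auto
  have l0: "length xs \<noteq> 0" using xs(1) by simp
  have "length xs = 2 \<or> length xs = 3" using l0 l1 xs(2) by presburger
  then show ?thesis
  proof
    assume l: "length xs = 2"
    then have "line_adj E (xs ! 0) (xs ! 1)" using xs(6) by auto
    moreover have "xs ! 1 = f" using hl l by simp
    ultimately have "e \<inter> f \<noteq> {}" using h0 unfolding line_adj_def by simp
    then show ?thesis using xs(5) by blast
  next
    assume l: "length xs = 3"
    then have a: "line_adj E (xs ! 0) (xs ! 1)" "line_adj E (xs ! 1) (xs ! 2)"
      using xs(6)[rule_format, of 0] xs(6)[rule_format, of 1] by (simp_all add: numeral_eq_Suc)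
    moreover have "xs ! 2 = f" using hl l by simp
    ultimately show ?thesis using h0 unfolding line_adj_def by blast
  qed
qed

lemma no_cycle:
  assumes cyc: "is_cycle RR (\<lambda>e f. e \<noteq> f \<and> edge_dist_le E e f 2) cs"
  shows False
proof -
  define k where "k = length cs"
  have cy: "3 \<le> length cs \<and> distinct cs \<and> set cs \<subseteq> RR \<and>
     (\<forall>i < length cs. cs ! i \<noteq> cs ! ((i + 1) mod length cs) \<and>
        edge_dist_le E (cs ! i) (cs ! ((i + 1) mod length cs)) 2)"
    using cyc unfolding is_cycle_def by simp
  have k3: "k \<ge> 3" and dcs: "distinct cs" and sub: "set cs \<subseteq> RR"
    using cy unfolding k_def by simp_all
  have adj: "\<forall>i<k. cs ! i \<noteq> cs ! ((i + 1) mod k) \<and> edge_dist_le E (cs ! i) (cs ! ((i + 1) mod k)) 2"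
    using cy unfolding k_def by simp
  define c where "c i = cs ! (i mod k)" for i
  have kpos: "k > 0" using k3 by simp
  have cR: "c i \<in> RR" for i
  proof -
    have "i mod k < length cs" using kpos k_def by simp
    then have "cs ! (i mod k) \<in> set cs" by (rule nth_mem)
    then show ?thesis unfolding c_def using sub by blast
  qed
  have cne: "c i \<noteq> c j" if "i mod k \<noteq> j mod k" for i j
  proof -
    have "i mod k < length cs" "j mod k < length cs" using kpos k_def by simp_all
    then show ?thesis unfolding c_def using dcs that by (simp add: nth_eq_iff_index_eq)
  qed
  have c2: "c (Suc (Suc i)) \<noteq> c i" for i
  proof -
    have "(i + 2) mod k \<noteq> i mod k" by (rule mod_plus2_ne[OF k3])
    then have "c (i + 2) \<noteq> c i" by (rule cne)
    then show ?thesis by (simp add: numeral_eq_Suc)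
  qed
  have cadj: "Out (c i) (c (Suc i)) \<or> Out (c (Suc i)) (c i)" for i
  proof -
    have m: "i mod k < k" using kpos by simp
    have eq: "(i mod k + 1) mod k = Suc i mod k" by (simp add: mod_Suc_eq)
    have A: "cs ! (i mod k) \<noteq> cs ! ((i mod k + 1) mod k) \<and>
        edge_dist_le E (cs ! (i mod k)) (cs ! ((i mod k + 1) mod k)) 2"
      using adj m by blast
    have cS: "c (Suc i) = cs ! ((i mod k + 1) mod k)" unfolding c_def eq ..
    have ci: "c i = cs ! (i mod k)" unfolding c_def ..
    have ne: "c i \<noteq> c (Suc i)" using A cS ci by simp
    have D: "edge_dist_le E (c i) (c (Suc i)) 2" using A cS ci by simp
    obtain h where h: "h \<in> E" "c i \<inter> h \<noteq> {}" "h \<inter> c (Suc i) \<noteq> {}"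
      using dist_edge[OF D ne] by blast
    show ?thesis by (rule adj_out[OF cR cR ne h])
  qed
  have per: "c (i + k * m) = c i" for i m unfolding c_def by simp
  have stp: "\<not> Out (c (Suc i)) (c (Suc (Suc i)))" if "\<not> Out (c i) (c (Suc i))" for i
  proof
    assume o: "Out (c (Suc i)) (c (Suc (Suc i)))"
    have "Out (c (Suc i)) (c i)" using cadj[of i] that by blast
    then have "c i = c (Suc (Suc i))" using out_fun o by blast
    then show False using c2[of i] by simp
  qed
  show False
  proof (cases "\<forall>i. Out (c i) (c (Suc i))")
    case True
    have o0: "Out (c 0) (c 1)" using True[rule_format, of 0] by simp
    have o1: "Out (c 1) (c 2)" using True[rule_format, of 1] by (simp add: numeral_eq_Suc)
    have o2: "Out (c 2) (c 3)" using True[rule_format, of 2] by (simp add: numeral_eq_Suc)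
    have o3: "Out (c 3) (c 4)" using True[rule_format, of 3] by (simp add: numeral_eq_Suc)
    have n1: "c 2 \<noteq> c 0" using c2[of 0] by (simp add: numeral_eq_Suc)
    have n2: "c 3 \<noteq> c 1" using c2[of 1] by (simp add: numeral_eq_Suc)
    have n3: "c 4 \<noteq> c 2" using c2[of 2] by (simp add: numeral_eq_Suc)
    show False by (rule chain5[OF o0 o1 o2 o3 n1 n2 n3])
  next
    case False
    then obtain i0 where i0: "\<not> Out (c i0) (c (Suc i0))" by blast
    have all: "\<not> Out (c (i0 + j)) (c (Suc (i0 + j)))" for j
    proof (induction j)
      case 0 then show ?case using i0 by simp
    next
      case (Suc j) then show ?case using stp[of "i0 + j"] by simp
    qed
    have B: "Out (c (Suc i)) (c i)" for i
    proof -
      have "i + k * i0 \<ge> i0" using kpos by (simp add: trans_le_add2)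
      then obtain j where j: "i + k * i0 = i0 + j" by (metis le_add_diff_inverse)
      have "\<not> Out (c (i + k * i0)) (c (Suc (i + k * i0)))" using all[of j] j by simp
      moreover have "c (Suc (i + k * i0)) = c (Suc i)" using per[of "Suc i" i0] by simp
      ultimately have "\<not> Out (c i) (c (Suc i))" using per[of i i0] by simp
      then show ?thesis using cadj[of i] by blast
    qed
    have o0: "Out (c (k + 4)) (c (k + 3))" using B[of "k + 3"] by (simp add: numeral_eq_Suc)
    have o1: "Out (c (k + 3)) (c (k + 2))" using B[of "k + 2"] by (simp add: numeral_eq_Suc)
    have o2: "Out (c (k + 2)) (c (k + 1))" using B[of "k + 1"] by (simp add: numeral_eq_Suc)
    have o3: "Out (c (k + 1)) (c k)" using B[of k] by simp
    have n1: "c (k + 2) \<noteq> c (k + 4)" using c2[of "k + 2"] by (simp add: numeral_eq_Suc)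
    have n2: "c (k + 1) \<noteq> c (k + 3)" using c2[of "k + 1"] by (simp add: numeral_eq_Suc)
    have n3: "c k \<noteq> c (k + 2)" using c2[of k] by (simp add: numeral_eq_Suc)
    show False by (rule chain5[OF o0 o1 o2 o3 n1 n2 n3])
  qed
qed

end

theorem lemma5:
  fixes V :: "'a set" and E M1 M2 :: "'a set set"
  assumes "simple_graph V E"
    and "connected_graph V E"
    and "\<forall>v\<in>V. degree E v \<le> 3"
    and "\<forall>v\<in>V. degree E v \<ge> 2"
    and "\<forall>u v. {u, v} \<in> E \<longrightarrow> \<not> (degree E u = 3 \<and> degree E v = 3)"
    and "matching E M1" and "matching E M2" and "M1 \<inter> M2 = {}"
    and "\<forall>N1 N2. matching E N1 \<and> matching E N2 \<and> N1 \<inter> N2 = {}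
           \<longrightarrow> card (N1 \<union> N2) \<le> card (M1 \<union> M2)"
    and "\<forall>N1 N2. matching E N1 \<and> matching E N2 \<and> N1 \<inter> N2 = {}
           \<and> card (N1 \<union> N2) = card (M1 \<union> M2)
           \<longrightarrow> num_components (E - (M1 \<union> M2)) \<le> num_components (E - (N1 \<union> N2))"
  shows "\<not> has_odd_cycle (E - (M1 \<union> M2))
           (\<lambda>e f. e \<noteq> f \<and> edge_dist_le E e f 2)"
proof -
  interpret L V E M1 M2
    by (rule L.intro) (use assms in auto)
  show ?thesis unfolding has_odd_cycle_def using no_cycle by blast
qed

end
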